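(* Fix a continuous density $\rho_0$ on $[0,R)$ with mass function $m_0$, and let $p_1,p_2,p_3$ be three pairwise distinct solutions of the TOV system with this density, with central values $p_{c,i}=p_i(0)$. Then for every real $\lambda$, $$p(r)=\frac{\lambda\,p_1(r)[p_3(r)-p_2(r)]+(1-\lambda)\,p_2(r)[p_3(r)-p_1(r)]}{\lambda[p_3(r)-p_2(r)]+(1-\lambda)[p_3(r)-p_1(r)]}$$ solves the TOV system with density $\rho_0$ wherever the denominator does not vanish, and its central pressure is $$p_c=\frac{\lambda\,p_{c,1}[p_{c,3}-p_{c,2}]+(1-\lambda)\,p_{c,2}[p_{c,3}-p_{c,1}]}{\lambda[p_{c,3}-p_{c,2}]+(1-\lambda)[p_{c,3}-p_{c,1}]}.$$ *)

theory Defs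
  imports "HOL-Analysis.Analysis"
begin

definition mass_fun :: "(real \<Rightarrow> real) \<Rightarrow> real \<Rightarrow> real" where
  "mass_fun \<rho> r = integral {0..r} (\<lambda>s. 4 * pi * s^2 * \<rho> s)"

text \<open>Right-hand side of the TOV equation (units G = c = 1):
  p'(r) = - (rho(r) + p) (m(r) + 4 pi r^3 p) / (r (r - 2 m(r))).\<close>
definition tov_rhs :: "(real \<Rightarrow> real) \<Rightarrow> real \<Rightarrow> real \<Rightarrow> real" where
  "tov_rhs \<rho> r q =
     - (\<rho> r + q) * (mass_fun \<rho> r + 4 * pi * r^3 * q) / (r * (r - 2 * mass_fun \<rho> r))"

definition tov_solution :: "(real \<Rightarrow> real) \<Rightarrow> real \<Rightarrow> (real \<Rightarrow> real) \<Rightarrow> bool" where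
  "tov_solution \<rho> R p \<longleftrightarrow>
     continuous_on {0..<R} p \<and>
     (\<forall>r\<in>{0<..<R}. (p has_real_derivative tov_rhs \<rho> r (p r)) (at r))"

end

theory Submission
  imports Defs
begin

lemma riccati_identity:
  fixes P1 P2 P3 lam rh m c iK :: real
  defines "F \<equiv> (\<lambda>q. - (rh + q) * (m + c * q) * iK)"
  assumes Dn: "lam * (P3 - P2) + (1 - lam) * (P3 - P1) \<noteq> 0"
  shows "((lam * F P1 * (P3 - P2) + lam * P1 * (F P3 - F P2)
          + ((1 - lam) * F P2 * (P3 - P1) + (1 - lam) * P2 * (F P3 - F P1)))
         * (lam * (P3 - P2) + (1 - lam) * (P3 - P1))
       - (lam * P1 * (P3 - P2) + (1 - lam) * P2 * (P3 - P1))
         * (lam * (F P3 - F P2) + (1 - lam) * (F P3 - F P1)))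
       / ((lam * (P3 - P2) + (1 - lam) * (P3 - P1)) * (lam * (P3 - P2) + (1 - lam) * (P3 - P1)))
     = F ((lam * P1 * (P3 - P2) + (1 - lam) * P2 * (P3 - P1)) / (lam * (P3 - P2) + (1 - lam) * (P3 - P1)))"
  using Dn unfolding F_def
  by (simp add: field_simps power2_eq_square) algebra

theorem mainTheorem6:
  fixes \<rho>0 p1 p2 p3 :: "real \<Rightarrow> real" and R lam :: real
  assumes "R > 0"
    and "continuous_on {0..<R} \<rho>0"
    and "tov_solution \<rho>0 R p1" and "tov_solution \<rho>0 R p2" and "tov_solution \<rho>0 R p3"
    and "\<exists>r\<in>{0..<R}. p1 r \<noteq> p2 r"
    and "\<exists>r\<in>{0..<R}. p1 r \<noteq> p3 r"
    and "\<exists>r\<in>{0..<R}. p2 r \<noteq> p3 r"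
  defines "D \<equiv> (\<lambda>r. lam * (p3 r - p2 r) + (1 - lam) * (p3 r - p1 r))"
    and "p \<equiv> (\<lambda>r. (lam * p1 r * (p3 r - p2 r) + (1 - lam) * p2 r * (p3 r - p1 r)) / (lam * (p3 r - p2 r) + (1 - lam) * (p3 r - p1 r)))"
  shows "(\<forall>r\<in>{0<..<R}. D r \<noteq> 0 \<longrightarrow> (p has_real_derivative tov_rhs \<rho>0 r (p r)) (at r))
    \<and> (D 0 \<noteq> 0 \<longrightarrow> continuous (at 0 within {0..<R}) p)
    \<and> p 0 = (lam * p1 0 * (p3 0 - p2 0) + (1 - lam) * p2 0 * (p3 0 - p1 0))
            / (lam * (p3 0 - p2 0) + (1 - lam) * (p3 0 - p1 0))"
proof (intro conjI ballI impI)
  fix r assume r: "r \<in> {0<..<R}" and Dr: "D r \<noteq> 0"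
  define F where "F \<equiv> (\<lambda>q. - (\<rho>0 r + q) * (mass_fun \<rho>0 r + (4 * pi * r^3) * q)
      * inverse (r * (r - 2 * mass_fun \<rho>0 r)))"
  have T: "tov_rhs \<rho>0 r q = F q" for q
    unfolding tov_rhs_def F_def by (simp add: divide_inverse mult.assoc)
  have d1: "(p1 has_real_derivative F (p1 r)) (at r)"
    using assms(3) r unfolding tov_solution_def by (metis T)
  have d2: "(p2 has_real_derivative F (p2 r)) (at r)"
    using assms(4) r unfolding tov_solution_def by (metis T)
  have d3: "(p3 has_real_derivative F (p3 r)) (at r)"
    using assms(5) r unfolding tov_solution_def by (metis T)
  have Dr': "lam * (p3 r - p2 r) + (1 - lam) * (p3 r - p1 r) \<noteq> 0" using Dr D_def by simp
  have DD: "(p has_real_derivative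
     ((lam * F (p1 r) * (p3 r - p2 r) + lam * p1 r * (F (p3 r) - F (p2 r))
          + ((1 - lam) * F (p2 r) * (p3 r - p1 r) + (1 - lam) * p2 r * (F (p3 r) - F (p1 r))))
         * (lam * (p3 r - p2 r) + (1 - lam) * (p3 r - p1 r))
       - (lam * p1 r * (p3 r - p2 r) + (1 - lam) * p2 r * (p3 r - p1 r))
         * (lam * (F (p3 r) - F (p2 r)) + (1 - lam) * (F (p3 r) - F (p1 r))))
       / ((lam * (p3 r - p2 r) + (1 - lam) * (p3 r - p1 r)) * (lam * (p3 r - p2 r) + (1 - lam) * (p3 r - p1 r)))) (at r)" (is "(_ has_real_derivative ?dd) _")
    unfolding p_def
    apply (rule DERIV_divide[where g="\<lambda>r. lam * (p3 r - p2 r) + (1 - lam) * (p3 r - p1 r)"])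
    using Dr' by (auto intro!: derivative_eq_intros d1 d2 d3 simp: algebra_simps)
  moreover have "F (p r) = ?dd"
    unfolding p_def F_def by (rule riccati_identity[OF Dr', symmetric])
  ultimately show "(p has_real_derivative tov_rhs \<rho>0 r (p r)) (at r)" by (simp add: T)
next
  assume D0: "D 0 \<noteq> 0"
  have c: "continuous (at 0 within {0..<R}) pi" if "tov_solution \<rho>0 R pi" for pi
    using that assms(1) unfolding tov_solution_def
    by (meson atLeastLessThan_iff continuous_on_eq_continuous_within order_refl)
  show "continuous (at 0 within {0..<R}) p"
    unfolding p_def using D0 D_def c[OF assms(3)] c[OF assms(4)] c[OF assms(5)]
    by (intro continuous_intros) auto
qed (simp add: p_def)

end
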